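(* Let $X$ be a vector lattice and let $l : X \to \mathbb{R}$ be a linear functional. Then $l$ is the sum of some pair of Riesz homomorphisms $X \to \mathbb{R}$ if and only if $l$ is positive and its kernel $\ker(l)$ is a Grothendieck subspace of $X$.
   Context: A Riesz homomorphism $X\to\mathbb{R}$ is a linear functional preserving finite lattice operations. A linear subspace $H$ of a vector lattice is called a Grothendieck subspace (or $G$-space) if for all $x, y \in H$ one has $x \vee y \vee 0 + x \wedge y \wedge 0 \in H$. *)

theory Defs
  imports "HOL-Analysis.Analysis"
begin

definition riesz_hom :: "('a::{ordered_real_vector, lattice} \<Rightarrow> real) \<Rightarrow> bool" where
  "riesz_hom f \<longleftrightarrow> linear f \<and>
     (\<forall>x y. f (sup x y) = max (f x) (f y)) \<and>
     (\<forall>x y. f (inf x y) = min (f x) (f y))"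

definition positive_functional :: "('a::{ordered_real_vector, lattice} \<Rightarrow> real) \<Rightarrow> bool" where
  "positive_functional f \<longleftrightarrow> (\<forall>x. 0 \<le> x \<longrightarrow> 0 \<le> f x)"

definition G_space :: "('a::{ordered_real_vector, lattice}) set \<Rightarrow> bool" where
  "G_space H \<longleftrightarrow> subspace H \<and>
     (\<forall>x\<in>H. \<forall>y\<in>H. sup (sup x y) 0 + inf (inf x y) 0 \<in> H)"

end

theory Submission
  imports Defs
begin


lemma la_sup_add: "sup a b + c = sup (a + c) (b + c :: 'a::{ordered_ab_group_add, lattice})"
proof (rule order.antisym)
  show "sup a b + c \<le> sup (a + c) (b + c)"
    by (metis add_le_cancel_right diff_add_cancel le_sup_iff sup_ge1 sup_ge2 add_le_imp_le_right diff_le_eq)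
qed simp

lemma la_inf_add: "inf a b + c = inf (a + c) (b + c :: 'a::{ordered_ab_group_add, lattice})"
proof (rule order.antisym)
  show "inf (a + c) (b + c) \<le> inf a b + c"
    by (metis le_diff_eq le_inf_iff inf_le1 inf_le2 diff_le_eq)
qed simp

lemma la_inf_neg: "inf a b = - sup (- a) (- (b :: 'a::{ordered_ab_group_add, lattice}))"
proof (rule order.antisym)
  have "sup (- a) (- b) \<le> - inf a b" by simp
  then show "inf a b \<le> - sup (- a) (- b)"
    using le_minus_iff by blast
  show "- sup (- a) (- b) \<le> inf a b"
    by (simp add: minus_le_iff)
qed

lemma la_add_eq: "a + b = sup a b + inf a (b :: 'a::{ordered_ab_group_add, lattice})"
proof -
  have "sup a b + inf a b = sup a b + (- sup (-a) (-b))" by (simp add: la_inf_neg)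
  also have "sup (-a) (-b) = sup (-a + (a + b)) (-b + (a+b)) - (a+b)"
    by (metis la_sup_add add_diff_cancel)
  also have "\<dots> = sup b a - (a+b)" by (simp add: algebra_simps)
  finally show ?thesis by (simp add: algebra_simps sup_commute)
qed

lemma la_parts: "sup z 0 - sup (- z) 0 = (z :: 'a::{ordered_ab_group_add, lattice})"
proof -
  have "z = sup z 0 + inf z 0" using la_add_eq[of z 0] by simp
  moreover have "inf z 0 = - sup (-z) 0" using la_inf_neg[of z 0] by simp
  ultimately show ?thesis by (metis diff_conv_add_uminus)
qed

lemma la_disj: "inf (sup z 0) (sup (- z) 0) = (0 :: 'a::{ordered_ab_group_add, lattice})"
proof -
  have n: "sup (- z) 0 = sup z 0 - z" using la_parts[of z] by (simp add: algebra_simps)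
  have "inf (sup z 0) (sup z 0 - z) = inf (0 + sup z 0) (- z + sup z 0)" by (simp add: algebra_simps)
  also have "\<dots> = inf 0 (-z) + sup z 0" by (simp add: la_inf_add)
  also have "inf 0 (-z) = - sup 0 z" using la_inf_neg[of 0 "-z"] by simp
  finally show ?thesis using n by (simp add: sup_commute)
qed

lemma la_diff_inf: "a - inf a b = sup (a - b) (0 :: 'a::{ordered_ab_group_add, lattice})"
proof -
  have "a - inf a b = sup (-a) (-b) + a" using la_inf_neg[of a b] by (simp add: algebra_simps)
  also have "\<dots> = sup (-a + a) (-b + a)" by (rule la_sup_add)
  also have "\<dots> = sup 0 (a - b)" by (simp add: algebra_simps)
  finally show ?thesis by (simp add: sup_commute)
qed

lemma la_inf_sum_le:
  fixes a b c :: "'a::{ordered_ab_group_add, lattice}"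
  assumes "0 \<le> a" "0 \<le> b" "0 \<le> c"
  shows "inf (a + b) c \<le> inf a c + inf b c"
proof -
  have "inf a c + inf b c = inf (a + inf b c) (c + inf b c)" by (simp add: la_inf_add)
  also have "a + inf b c = inf (a + b) (a + c)" using la_inf_add[of b c a] by (simp add: add.commute)
  also have "c + inf b c = inf (c + b) (c + c)" using la_inf_add[of b c c] by (simp add: add.commute)
  finally have e: "inf a c + inf b c = inf (inf (a + b) (a + c)) (inf (c + b) (c + c))" .
  have "inf (a + b) c \<le> a + c" using assms by (meson add_increasing inf_le2 order.trans)
  moreover have "inf (a + b) c \<le> c + b" using assms by (meson add_increasing2 inf_le2 order.trans)
  moreover have "inf (a + b) c \<le> c + c" using assms by (meson add_increasing2 inf_le2 order.trans)
  ultimately show ?thesis unfolding e by simp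
qed

lemma la_scale_inf:
  fixes a b :: "'a::{ordered_real_vector, lattice}"
  assumes "0 \<le> c"
  shows "c *\<^sub>R inf a b = inf (c *\<^sub>R a) (c *\<^sub>R b)"
proof (cases "c = 0")
  case True then show ?thesis by simp
next
  case False
  then have c: "0 < c" using assms by simp
  show ?thesis
  proof (rule order.antisym)
    show "c *\<^sub>R inf a b \<le> inf (c *\<^sub>R a) (c *\<^sub>R b)"
      using assms by (simp add: scaleR_left_mono)
    have "inverse c *\<^sub>R inf (c *\<^sub>R a) (c *\<^sub>R b) \<le> inf a b"
    proof -
      have "inverse c *\<^sub>R inf (c *\<^sub>R a) (c *\<^sub>R b) \<le> inverse c *\<^sub>R (c *\<^sub>R a)"
        using c by (intro scaleR_left_mono) auto
      moreover have "inverse c *\<^sub>R inf (c *\<^sub>R a) (c *\<^sub>R b) \<le> inverse c *\<^sub>R (c *\<^sub>R b)"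
        using c by (intro scaleR_left_mono) auto
      moreover have "inverse c *\<^sub>R (c *\<^sub>R a) = a" "inverse c *\<^sub>R (c *\<^sub>R b) = b"
        using c by simp_all
      ultimately show ?thesis by (metis le_inf_iff)
    qed
    then have "c *\<^sub>R (inverse c *\<^sub>R inf (c *\<^sub>R a) (c *\<^sub>R b)) \<le> c *\<^sub>R inf a b"
      using c by (intro scaleR_left_mono) auto
    moreover have "c *\<^sub>R (inverse c *\<^sub>R inf (c *\<^sub>R a) (c *\<^sub>R b)) = inf (c *\<^sub>R a) (c *\<^sub>R b)"
      using c by simp
    ultimately show "inf (c *\<^sub>R a) (c *\<^sub>R b) \<le> c *\<^sub>R inf a b" by simp
  qed
qed


lemma disj_scale:
  fixes p q :: "'a::{ordered_real_vector, lattice}"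
  assumes "0 \<le> \<alpha>" "0 \<le> \<beta>" "0 \<le> p" "0 \<le> q" "inf p q = 0"
  shows "inf (\<alpha> *\<^sub>R p) (\<beta> *\<^sub>R q) = 0"
proof (rule order.antisym)
  have "\<alpha> *\<^sub>R p \<le> (\<alpha> + \<beta>) *\<^sub>R p" using assms by (intro scaleR_right_mono) auto
  moreover have "\<beta> *\<^sub>R q \<le> (\<alpha> + \<beta>) *\<^sub>R q" using assms by (intro scaleR_right_mono) auto
  ultimately have "inf (\<alpha> *\<^sub>R p) (\<beta> *\<^sub>R q) \<le> inf ((\<alpha> + \<beta>) *\<^sub>R p) ((\<alpha> + \<beta>) *\<^sub>R q)"
    by (rule inf_mono)
  also have "\<dots> = (\<alpha> + \<beta>) *\<^sub>R inf p q" using assms la_scale_inf[of "\<alpha>+\<beta>" p q] by simp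
  finally show "inf (\<alpha> *\<^sub>R p) (\<beta> *\<^sub>R q) \<le> 0" using assms by simp
  show "0 \<le> inf (\<alpha> *\<^sub>R p) (\<beta> *\<^sub>R q)" using assms by (simp add: scaleR_nonneg_nonneg)
qed

lemma riesz_crit:
  fixes h :: "'a::{ordered_real_vector, lattice} \<Rightarrow> real"
  assumes lin: "linear h" and pos: "\<And>x. 0 \<le> x \<Longrightarrow> 0 \<le> h x"
    and dis: "\<And>a b. 0 \<le> a \<Longrightarrow> 0 \<le> b \<Longrightarrow> inf a b = 0 \<Longrightarrow> h a = 0 \<or> h b = 0"
  shows "riesz_hom h"
proof -
  have supr: "h (sup x y) = max (h x) (h y)" for x y
  proof -
    define w where "w = x - y"
    have e1: "sup x y = sup w 0 + y" unfolding w_def using la_sup_add[of "x - y" 0 y] by simp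
    have e2: "w = sup w 0 - sup (- w) 0" by (simp add: la_parts)
    have "h (sup w 0) = 0 \<or> h (sup (- w) 0) = 0" by (rule dis) (auto simp: la_disj)
    moreover have "h w = h (sup w 0) - h (sup (- w) 0)" using e2 lin by (metis linear_diff)
    moreover have "0 \<le> h (sup w 0)" "0 \<le> h (sup (- w) 0)" by (auto intro: pos)
    moreover have "h (sup x y) = h (sup w 0) + h y" using e1 lin by (simp add: linear_add)
    moreover have "h w = h x - h y" unfolding w_def using lin by (simp add: linear_diff)
    ultimately show ?thesis by auto
  qed
  have "h (inf x y) = min (h x) (h y)" for x y
  proof -
    have "inf x y = x + y - sup x y" using la_add_eq[of x y] by (simp add: algebra_simps)
    then have "h (inf x y) = h x + h y - h (sup x y)" using lin by (simp add: linear_add linear_diff)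
    then show ?thesis using supr[of x y] by auto
  qed
  then show ?thesis unfolding riesz_hom_def using lin supr by auto
qed

lemma riesz_pos:
  fixes f :: "'a::{ordered_real_vector, lattice} \<Rightarrow> real"
  assumes "riesz_hom f" "0 \<le> x" shows "0 \<le> f x"
proof -
  have "f (sup x 0) = max (f x) (f 0)" using assms unfolding riesz_hom_def by blast
  moreover have "f 0 = 0" using assms unfolding riesz_hom_def by (simp add: linear_0)
  moreover have "sup x 0 = x" using assms by (simp add: sup_absorb1)
  ultimately show ?thesis by simp
qed

definition Tt :: "('a::{ordered_real_vector, lattice} \<Rightarrow> real) \<Rightarrow> 'a \<Rightarrow> 'a \<Rightarrow> real" where
  "Tt l v p = l p / l v + 1"
definition LL :: "('a::{ordered_real_vector, lattice} \<Rightarrow> real) \<Rightarrow> 'a \<Rightarrow> 'a \<Rightarrow> real" where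
  "LL l v p = l (inf p (Tt l v p *\<^sub>R v))"
definition gg :: "('a::{ordered_real_vector, lattice} \<Rightarrow> real) \<Rightarrow> 'a \<Rightarrow> 'a \<Rightarrow> real" where
  "gg l v z = LL l v (sup z 0) - LL l v (sup (- z) 0)"

context
  fixes l :: "'a::{ordered_real_vector, lattice} \<Rightarrow> real"
  assumes lin: "linear l" and pos: "positive_functional l" and G: "G_space {x. l x = 0}"
begin

lemma l_mono: "a \<le> b \<Longrightarrow> l a \<le> l b"
proof -
  assume "a \<le> b"
  then have "0 \<le> l (b - a)" using pos unfolding positive_functional_def by simp
  then show ?thesis using lin by (simp add: linear_diff)
qed

lemma l_nonneg: "0 \<le> a \<Longrightarrow> 0 \<le> l a"
  using pos unfolding positive_functional_def by simp

lemma three: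
  assumes p: "0 \<le> p" and q: "0 \<le> q" and r: "0 \<le> r"
    and pq: "inf p q = 0" and qr: "inf q r = 0" and pr: "inf p r = 0"
    and lp: "0 < l p" and lq: "0 < l q" and lr: "0 < l r"
  shows False
proof -
  define x where "x = l q *\<^sub>R p - l p *\<^sub>R q"
  define y where "y = l q *\<^sub>R r - l r *\<^sub>R q"
  have lx: "l x = 0" unfolding x_def using lin by (simp add: linear_diff linear_scale)
  have ly: "l y = 0" unfolding y_def using lin by (simp add: linear_diff linear_scale)
  have "sup (sup x y) 0 + inf (inf x y) 0 \<in> {x. l x = 0}"
    using G lx ly unfolding G_space_def by blast
  then have z: "l (sup (sup x y) 0) + l (inf (inf x y) 0) = 0" using lin by (simp add: linear_add)
  have "inf (l q *\<^sub>R p) (l p *\<^sub>R q) = 0" using p q pq lp lq by (intro disj_scale) auto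
  then have sx: "sup x 0 = l q *\<^sub>R p" unfolding x_def using la_diff_inf[of "l q *\<^sub>R p" "l p *\<^sub>R q"] by simp
  have "inf (l q *\<^sub>R r) (l r *\<^sub>R q) = 0" using r q qr lr lq
    by (subst inf_commute, intro disj_scale) (auto simp: inf_commute)
  then have sy: "sup y 0 = l q *\<^sub>R r" unfolding y_def using la_diff_inf[of "l q *\<^sub>R r" "l r *\<^sub>R q"] by simp
  have "sup (sup x y) 0 = sup (sup x 0) (sup y 0)" by (simp add: sup_aci)
  also have "\<dots> = l q *\<^sub>R p + l q *\<^sub>R r"
  proof -
    have "inf (l q *\<^sub>R p) (l q *\<^sub>R r) = 0" using p r pr lq by (intro disj_scale) auto
    then show ?thesis unfolding sx sy using la_add_eq[of "l q *\<^sub>R p" "l q *\<^sub>R r"] by simp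
  qed
  finally have s1: "l (sup (sup x y) 0) = l q * l p + l q * l r" using lin by (simp add: linear_add linear_scale)
  define m where "m = max (l p) (l r)"
  have "- (m *\<^sub>R q) \<le> x" unfolding x_def
  proof -
    have "l p *\<^sub>R q \<le> m *\<^sub>R q" unfolding m_def using q by (intro scaleR_right_mono) auto
    moreover have "0 \<le> l q *\<^sub>R p" using p lq by (intro scaleR_nonneg_nonneg) auto
    ultimately show "- (m *\<^sub>R q) \<le> l q *\<^sub>R p - l p *\<^sub>R q" by (simp add: algebra_simps) (metis add_increasing2)
  qed
  moreover have "- (m *\<^sub>R q) \<le> y" unfolding y_def
  proof -
    have "l r *\<^sub>R q \<le> m *\<^sub>R q" unfolding m_def using q by (intro scaleR_right_mono) auto
    moreover have "0 \<le> l q *\<^sub>R r" using r lq by (intro scaleR_nonneg_nonneg) auto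
    ultimately show "- (m *\<^sub>R q) \<le> l q *\<^sub>R r - l r *\<^sub>R q" by (simp add: algebra_simps) (metis add_increasing2)
  qed
  moreover have "- (m *\<^sub>R q) \<le> 0" using q lp unfolding m_def by (simp add: scaleR_nonneg_nonneg)
  ultimately have "- (m *\<^sub>R q) \<le> inf (inf x y) 0" by simp
  then have "l (- (m *\<^sub>R q)) \<le> l (inf (inf x y) 0)" by (rule l_mono)
  then have s2: "- (m * l q) \<le> l (inf (inf x y) 0)" using lin by (simp add: linear_neg linear_scale)
  have "l q * l p + l q * l r - m * l q > 0"
  proof -
    have "l p + l r - m > 0" unfolding m_def using lp lr by auto
    then have "l q * (l p + l r - m) > 0" using lq by simp
    then show ?thesis by (simp add: algebra_simps)
  qed
  then show False using z s1 s2 by linarith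
qed

end


context
  fixes l :: "'a::{ordered_real_vector, lattice} \<Rightarrow> real" and u v :: 'a
  assumes lin: "linear l" and pos: "positive_functional l" and G: "G_space {x. l x = 0}"
    and u: "0 \<le> u" and v: "0 \<le> v" and uv: "inf u v = 0" and lu: "0 < l u" and lv: "0 < l v"
begin

lemma mono': "a \<le> b \<Longrightarrow> l a \<le> l b" using l_mono[OF lin pos G] .
lemma three': "\<lbrakk>0 \<le> p; 0 \<le> q; 0 \<le> r; inf p q = 0; inf q r = 0; inf p r = 0; 0 < l p; 0 < l q; 0 < l r\<rbrakk> \<Longrightarrow> False"
  using three[OF lin pos G] by blast

lemma sv_nonneg: "0 \<le> s \<Longrightarrow> 0 \<le> s *\<^sub>R v"
  using v by (simp add: scaleR_nonneg_nonneg)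

lemma u_sv: "0 \<le> s \<Longrightarrow> inf u (s *\<^sub>R v) = 0"
  using disj_scale[of 1 s u v] u v uv by simp

lemma disj_le:
  fixes x y z :: 'a
  assumes "0 \<le> x" "x \<le> y" "inf z y = 0" "0 \<le> z" shows "inf z x = 0"
proof (rule order.antisym)
  have "inf z x \<le> inf z y" using assms(2) by (intro inf_mono) simp_all
  then show "inf z x \<le> 0" using assms(3) by simp
  show "0 \<le> inf z x" using assms(1,4) by simp
qed

lemma stab:
  assumes p: "0 \<le> p" and t: "l p < t * l v" and ts: "t \<le> s"
  shows "l (inf p (s *\<^sub>R v)) = l (inf p (t *\<^sub>R v))"
proof -
  have "0 < t * l v" using t l_nonneg[OF lin pos G p] by linarith
  then have t0: "0 < t" using lv by (simp add: zero_less_mult_iff)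
  have s0: "0 \<le> s" using t0 ts by simp
  define a where "a = inf p (s *\<^sub>R v)"
  have a0: "0 \<le> a" unfolding a_def using p sv_nonneg[OF s0] by simp
  have ap: "a \<le> p" "a \<le> s *\<^sub>R v" unfolding a_def by auto
  have tvs: "t *\<^sub>R v \<le> s *\<^sub>R v" using ts v by (intro scaleR_right_mono)
  have ia: "inf a (t *\<^sub>R v) = inf p (t *\<^sub>R v)" unfolding a_def
    using tvs by (simp add: inf_assoc inf_absorb2)
  define d where "d = sup (a - t *\<^sub>R v) 0"
  define w where "w = sup (- (a - t *\<^sub>R v)) 0"
  have dd: "d = a - inf a (t *\<^sub>R v)" unfolding d_def by (simp add: la_diff_inf)
  have dw: "inf d w = 0" unfolding d_def w_def by (rule la_disj)
  have d0: "0 \<le> d" "0 \<le> w" unfolding d_def w_def by auto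
  have "0 \<le> inf a (t *\<^sub>R v)" using a0 sv_nonneg[of t] t0 by simp
  then have "d \<le> a" unfolding dd by simp
  then have "d \<le> s *\<^sub>R v" using ap(2) by (rule order.trans)
  then have ud: "inf u d = 0" using disj_le[of d "s *\<^sub>R v" u] d0 u_sv[OF s0] u by simp
  have "w \<le> t *\<^sub>R v" unfolding w_def using a0 sv_nonneg[of t] t0 by simp
  then have uw: "inf u w = 0" using d0 u_sv[of t] t0 u disj_le[of w "t *\<^sub>R v" u] by simp
  have "l (t *\<^sub>R v - a) \<le> l w" unfolding w_def by (rule mono') simp
  moreover have "l (t *\<^sub>R v - a) = t * l v - l a" using lin by (simp add: linear_diff linear_scale)
  moreover have "l a \<le> l p" using ap mono' by blast
  ultimately have lw: "0 < l w" using t by linarith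
  have "\<not> 0 < l d"
  proof
    assume "0 < l d"
    then show False using three'[of d w u] d0 u dw uw ud lw lu by (simp add: inf_commute)
  qed
  moreover have "0 \<le> l d" using d0 l_nonneg[OF lin pos G] by blast
  ultimately have "l d = 0" by simp
  then show ?thesis unfolding dd ia using lin by (simp add: linear_diff a_def)
qed

lemma Lstab:
  assumes p: "0 \<le> p" and s: "l p < s * l v"
  shows "l (inf p (s *\<^sub>R v)) = LL l v p"
proof -
  define m where "m = max s (Tt l v p)"
  have T: "l p < Tt l v p * l v" unfolding Tt_def using lv by (simp add: field_simps)
  have "s \<le> m" "Tt l v p \<le> m" unfolding m_def by auto
  then have "l (inf p (m *\<^sub>R v)) = l (inf p (s *\<^sub>R v))"
    "l (inf p (m *\<^sub>R v)) = l (inf p (Tt l v p *\<^sub>R v))"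
    using stab[OF p s] stab[OF p T] by blast+
  then show ?thesis unfolding LL_def by simp
qed

lemma L_add:
  assumes p: "0 \<le> p" and q: "0 \<le> q"
  shows "LL l v (p + q) = LL l v p + LL l v q"
proof -
  have lp: "0 \<le> l p" "0 \<le> l q" using p q l_nonneg[OF lin pos G] by auto
  define s where "s = (l p + l q) / l v + 1"
  have sv: "s * l v = l p + l q + l v" unfolding s_def using lv by (simp add: field_simps)
  have s0: "0 \<le> s" unfolding s_def using lp lv by simp
  have lpq: "l (p + q) = l p + l q" using lin by (simp add: linear_add)
  have 2: "(2 * s) * l v = 2 * (s * l v)" by simp
  have pq: "0 \<le> p + q" using p q by (rule add_nonneg_nonneg)
  have h1: "l (p+q) < s * l v" "l (p+q) < (2 * s) * l v" "l p < s * l v" "l q < s * l v"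
    using lpq sv lv lp 2 by linarith+
  have e1: "l (inf (p+q) (s *\<^sub>R v)) = LL l v (p+q)" by (rule Lstab[OF pq h1(1)])
  have e2: "l (inf (p+q) ((2 * s) *\<^sub>R v)) = LL l v (p+q)" by (rule Lstab[OF pq h1(2)])
  have e3: "l (inf p (s *\<^sub>R v)) = LL l v p" by (rule Lstab[OF p h1(3)])
  have e4: "l (inf q (s *\<^sub>R v)) = LL l v q" by (rule Lstab[OF q h1(4)])
  have "inf (p+q) (s *\<^sub>R v) \<le> inf p (s *\<^sub>R v) + inf q (s *\<^sub>R v)"
    by (rule la_inf_sum_le[OF p q sv_nonneg[OF s0]])
  then have "l (inf (p+q) (s *\<^sub>R v)) \<le> l (inf p (s *\<^sub>R v) + inf q (s *\<^sub>R v))"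
    by (rule mono')
  moreover have "l (inf p (s *\<^sub>R v) + inf q (s *\<^sub>R v)) = l (inf p (s *\<^sub>R v)) + l (inf q (s *\<^sub>R v))"
    using lin by (rule linear_add)
  ultimately have le1: "LL l v (p+q) \<le> LL l v p + LL l v q"
    using e1 e3 e4 by linarith
  have "inf p (s *\<^sub>R v) + inf q (s *\<^sub>R v) \<le> inf (p+q) ((2 * s) *\<^sub>R v)"
  proof -
    have "inf p (s *\<^sub>R v) + inf q (s *\<^sub>R v) \<le> p + q" by (intro add_mono) auto
    moreover have "inf p (s *\<^sub>R v) + inf q (s *\<^sub>R v) \<le> s *\<^sub>R v + s *\<^sub>R v" by (intro add_mono) auto
    moreover have "s *\<^sub>R v + s *\<^sub>R v = (2 * s) *\<^sub>R v" by (simp add: scaleR_left_distrib[symmetric])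
    ultimately show ?thesis by simp
  qed
  then have "l (inf p (s *\<^sub>R v) + inf q (s *\<^sub>R v)) \<le> l (inf (p+q) ((2 * s) *\<^sub>R v))"
    by (rule mono')
  moreover have "l (inf p (s *\<^sub>R v) + inf q (s *\<^sub>R v)) = l (inf p (s *\<^sub>R v)) + l (inf q (s *\<^sub>R v))"
    using lin by (rule linear_add)
  ultimately have "LL l v p + LL l v q \<le> LL l v (p+q)"
    using e2 e3 e4 by linarith
  then show ?thesis using le1 by linarith
qed

lemma L_zero: "LL l v 0 = 0"
proof -
  have "inf 0 (Tt l v 0 *\<^sub>R v) = 0" unfolding Tt_def using lin lv sv_nonneg[of 1]
    by (simp add: linear_0 inf_absorb1)
  then show ?thesis unfolding LL_def using lin by (simp add: linear_0)
qed

lemma L_scale: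
  assumes p: "0 \<le> p" and c: "0 \<le> c"
  shows "LL l v (c *\<^sub>R p) = c * LL l v p"
proof (cases "c = 0")
  case True then show ?thesis by (simp add: L_zero)
next
  case False
  then have c: "0 < c" using c by simp
  define s where "s = Tt l v p"
  have T: "l p < s * l v" unfolding s_def Tt_def using lv by (simp add: field_simps)
  have "l (c *\<^sub>R p) < (c * s) * l v" using T c lin by (simp add: linear_scale)
  then have "LL l v (c *\<^sub>R p) = l (inf (c *\<^sub>R p) ((c * s) *\<^sub>R v))"
    using Lstab[of "c *\<^sub>R p" "c * s"] p c by (simp add: scaleR_nonneg_nonneg)
  also have "inf (c *\<^sub>R p) ((c * s) *\<^sub>R v) = c *\<^sub>R inf p (s *\<^sub>R v)"
    using la_scale_inf[of c p "s *\<^sub>R v"] c by simp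
  also have "l \<dots> = c * LL l v p" using lin unfolding s_def LL_def by (simp add: linear_scale)
  finally show ?thesis .
qed

lemma L_nonneg: "0 \<le> p \<Longrightarrow> 0 \<le> LL l v p"
  unfolding LL_def Tt_def using l_nonneg[OF lin pos G] lv l_nonneg[OF lin pos G, of p] sv_nonneg
  by simp

lemma L_le: "LL l v p \<le> l p"
  unfolding LL_def using mono' by simp

lemma g_decomp:
  assumes a: "0 \<le> a" and b: "0 \<le> b" and z: "z = a - b"
  shows "gg l v z = LL l v a - LL l v b"
proof -
  have h: "sup z 0 - sup (- z) 0 = a - b" using la_parts[of z] z by simp
  have "sup z 0 + b = a + sup (- z) 0" using h by (simp add: algebra_simps)
  then have "LL l v (sup z 0 + b) = LL l v (a + sup (- z) 0)" by simp
  then have "LL l v (sup z 0) + LL l v b = LL l v a + LL l v (sup (- z) 0)"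
    using L_add a b by simp
  then show ?thesis unfolding gg_def by simp
qed

lemma g_lin: "linear (gg l v)"
proof (rule linearI)
  fix x y :: 'a
  have "x + y = (sup x 0 + sup y 0) - (sup (-x) 0 + sup (-y) 0)"
    using la_parts[of x] la_parts[of y] by (simp add: algebra_simps)
  then have "gg l v (x + y) = LL l v (sup x 0 + sup y 0) - LL l v (sup (-x) 0 + sup (-y) 0)"
    by (intro g_decomp) (auto intro: add_nonneg_nonneg)
  then show "gg l v (x + y) = gg l v x + gg l v y"
    unfolding gg_def by (simp add: L_add)
next
  fix c :: real and x :: 'a
  show "gg l v (c *\<^sub>R x) = c *\<^sub>R gg l v x"
  proof (cases "0 \<le> c")
    case True
    have "c *\<^sub>R x = c *\<^sub>R sup x 0 - c *\<^sub>R sup (-x) 0"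
      using la_parts[of x] by (metis scaleR_right_diff_distrib)
    then have "gg l v (c *\<^sub>R x) = LL l v (c *\<^sub>R sup x 0) - LL l v (c *\<^sub>R sup (-x) 0)"
      using True by (intro g_decomp) (auto intro: scaleR_nonneg_nonneg)
    then show ?thesis using True unfolding gg_def by (simp add: L_scale algebra_simps)
  next
    case False
    have "c *\<^sub>R x = (-c) *\<^sub>R sup (-x) 0 - (-c) *\<^sub>R sup x 0"
      using la_parts[of x] by (metis scaleR_right_diff_distrib scaleR_minus_left minus_diff_eq)
    moreover have "0 \<le> (-c) *\<^sub>R sup x 0" "0 \<le> (-c) *\<^sub>R sup (-x) 0"
      using False by (intro scaleR_nonneg_nonneg; simp)+
    ultimately have "gg l v (c *\<^sub>R x) = LL l v ((-c) *\<^sub>R sup (-x) 0) - LL l v ((-c) *\<^sub>R sup x 0)"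
      using g_decomp by blast
    moreover have "LL l v ((-c) *\<^sub>R sup (-x) 0) = (-c) * LL l v (sup (-x) 0)"
      by (rule L_scale) (use False in auto)
    moreover have "LL l v ((-c) *\<^sub>R sup x 0) = (-c) * LL l v (sup x 0)"
      by (rule L_scale) (use False in auto)
    ultimately have "gg l v (c *\<^sub>R x) = c * LL l v (sup x 0) - c * LL l v (sup (-x) 0)" by simp
    moreover have gx: "gg l v x = LL l v (sup x 0) - LL l v (sup (-x) 0)" by (simp add: gg_def)
    ultimately show ?thesis by (simp add: right_diff_distrib)
  qed
qed

lemma g_pos: "0 \<le> p \<Longrightarrow> gg l v p = LL l v p"
  using g_decomp[of p 0 p] by (simp add: L_zero)

lemma g_riesz: "riesz_hom (gg l v)"
proof (rule riesz_crit[OF g_lin])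
  show "0 \<le> gg l v x" if "0 \<le> x" for x using that g_pos L_nonneg by simp
  fix a b :: 'a
  assume a: "0 \<le> a" and b: "0 \<le> b" and ab: "inf a b = 0"
  show "gg l v a = 0 \<or> gg l v b = 0"
  proof (rule ccontr)
    assume "\<not> ?thesis"
    then have ga: "0 < LL l v a" and gb: "0 < LL l v b"
      using g_pos L_nonneg a b by (auto simp: order_le_less)
    have la: "0 \<le> l a" "0 \<le> l b" using a b l_nonneg[OF lin pos G] by auto
    define s where "s = (l a + l b) / l v + 1"
    have s0: "0 \<le> s" unfolding s_def using la lv by simp
    have sv: "s * l v = l a + l b + l v" unfolding s_def using lv by (simp add: field_simps)
    have h1: "l a < s * l v" "l b < s * l v" using la sv lv by linarith+
    have e1: "l (inf a (s *\<^sub>R v)) = LL l v a" by (rule Lstab[OF a h1(1)])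
    have e2: "l (inf b (s *\<^sub>R v)) = LL l v b" by (rule Lstab[OF b h1(2)])
    have d1: "inf (inf a (s *\<^sub>R v)) (inf b (s *\<^sub>R v)) = 0"
      using disj_le[of "inf b (s *\<^sub>R v)" b "inf a (s *\<^sub>R v)"]
        disj_le[of "inf a (s *\<^sub>R v)" a b] ab a b sv_nonneg[OF s0] by (simp add: inf_commute)
    have d2: "inf u (inf a (s *\<^sub>R v)) = 0" "inf u (inf b (s *\<^sub>R v)) = 0"
      using disj_le[of "inf a (s *\<^sub>R v)" "s *\<^sub>R v" u] disj_le[of "inf b (s *\<^sub>R v)" "s *\<^sub>R v" u]
        u_sv[OF s0] u a b sv_nonneg[OF s0] by auto
    show False
      using three'[of "inf a (s *\<^sub>R v)" "inf b (s *\<^sub>R v)" u] d1 d2 e1 e2 ga gb lu u a b sv_nonneg[OF s0]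
      by (simp add: inf_commute)
  qed
qed


lemma f_riesz: "riesz_hom (\<lambda>z. l z - gg l v z)"
proof (rule riesz_crit)
  show "linear (\<lambda>z. l z - gg l v z)" by (rule linear_compose_sub[OF lin g_lin])
  show "0 \<le> l x - gg l v x" if "0 \<le> x" for x using that g_pos L_le by simp
  fix a b :: 'a
  assume a: "0 \<le> a" and b: "0 \<le> b" and ab: "inf a b = 0"
  show "l a - gg l v a = 0 \<or> l b - gg l v b = 0"
  proof (rule ccontr)
    assume "\<not> ?thesis"
    then have "l a - LL l v a \<noteq> 0" "l b - LL l v b \<noteq> 0" using g_pos[OF a] g_pos[OF b] by auto
    then have fa: "0 < l a - LL l v a" and fb: "0 < l b - LL l v b"
      using L_le[of a] L_le[of b] by linarith+
    have la: "0 \<le> l a" "0 \<le> l b" using a b l_nonneg[OF lin pos G] by auto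
    define s where "s = (l a + l b) / l v + 1"
    have s0: "0 \<le> s" unfolding s_def using la lv by simp
    have sv: "s * l v = l a + l b + l v" unfolding s_def using lv by (simp add: field_simps)
    have h1: "l a < s * l v" "l b < s * l v" using la sv lv by linarith+
    have e1: "l (inf a (s *\<^sub>R v)) = LL l v a" by (rule Lstab[OF a h1(1)])
    have e2: "l (inf b (s *\<^sub>R v)) = LL l v b" by (rule Lstab[OF b h1(2)])
    define a' where "a' = sup (a - s *\<^sub>R v) 0"
    define b' where "b' = sup (b - s *\<^sub>R v) 0"
    define w where "w = sup (s *\<^sub>R v - a - b) 0"
    have la': "l a' = l a - LL l v a" unfolding a'_def using la_diff_inf[of a "s *\<^sub>R v", symmetric] e1 lin
      by (simp add: linear_diff)
    have lb': "l b' = l b - LL l v b" unfolding b'_def using la_diff_inf[of b "s *\<^sub>R v", symmetric] e2 lin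
      by (simp add: linear_diff)
    have "l (s *\<^sub>R v - a - b) \<le> l w" unfolding w_def by (rule mono') simp
    moreover have "l (s *\<^sub>R v - a - b) = s * l v - l a - l b" using lin by (simp add: linear_diff linear_scale)
    ultimately have lw: "0 < l w" using sv lv by linarith
    have pos': "0 \<le> a'" "0 \<le> b'" "0 \<le> w" unfolding a'_def b'_def w_def by auto
    have "a - s *\<^sub>R v \<le> a" "b - s *\<^sub>R v \<le> b" using sv_nonneg[OF s0] by auto
    then have le: "a' \<le> a" "b' \<le> b" unfolding a'_def b'_def using a b by auto
    have "inf b' a = 0" using disj_le[of b' b a] pos' le ab a by (simp add: inf_commute)
    then have "inf b' a' = 0" using disj_le[of a' a b'] pos' le by simp
    then have d1: "inf a' b' = 0" by (simp add: inf_commute)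
    have "s *\<^sub>R v - a - b \<le> - (a - s *\<^sub>R v)" "s *\<^sub>R v - a - b \<le> - (b - s *\<^sub>R v)" using a b by auto
    note pre = this
    have wl: "w \<le> sup (- (a - s *\<^sub>R v)) 0" "w \<le> sup (- (b - s *\<^sub>R v)) 0"
      unfolding w_def by (rule sup_mono[OF pre(1) order.refl], rule sup_mono[OF pre(2) order.refl])
    have d2: "inf a' w = 0"
      using disj_le[of w "sup (- (a - s *\<^sub>R v)) 0" a'] pos' wl la_disj[of "a - s *\<^sub>R v"]
      unfolding a'_def by simp
    have d3: "inf b' w = 0"
      using disj_le[of w "sup (- (b - s *\<^sub>R v)) 0" b'] pos' wl la_disj[of "b - s *\<^sub>R v"]
      unfolding b'_def by simp
    show False using three'[of a' b' w] pos' d1 d2 d3 la' lb' fa fb lw by simp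
  qed
qed

end


theorem lemma1:
  fixes l :: "'a::{ordered_real_vector, lattice} \<Rightarrow> real"
  assumes "linear l"
  shows "(\<exists>f g. riesz_hom f \<and> riesz_hom g \<and> l = (\<lambda>x. f x + g x)) \<longleftrightarrow>
         positive_functional l \<and> G_space {x. l x = 0}"
proof
  assume "\<exists>f g. riesz_hom f \<and> riesz_hom g \<and> l = (\<lambda>x. f x + g x)"
  then obtain f g where f: "riesz_hom f" and g: "riesz_hom g" and l: "l = (\<lambda>x. f x + g x)" by blast
  have "positive_functional l"
    unfolding positive_functional_def l using riesz_pos[OF f] riesz_pos[OF g] by (simp add: add_nonneg_nonneg)
  moreover have "G_space {x. l x = 0}"
    unfolding G_space_def
  proof
    show "subspace {x. l x = 0}" unfolding subspace_def using assms
      by (simp add: linear_0 linear_add linear_scale)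
    show "\<forall>x\<in>{x. l x = 0}. \<forall>y\<in>{x. l x = 0}. sup (sup x y) 0 + inf (inf x y) 0 \<in> {x. l x = 0}"
    proof (intro ballI)
      fix x y assume x: "x \<in> {x. l x = 0}" and y: "y \<in> {x. l x = 0}"
      have hf: "f (sup (sup x y) 0 + inf (inf x y) 0) = max (max (f x) (f y)) 0 + min (min (f x) (f y)) 0"
        using f unfolding riesz_hom_def by (simp add: linear_add linear_0)
      have hg: "g (sup (sup x y) 0 + inf (inf x y) 0) = max (max (g x) (g y)) 0 + min (min (g x) (g y)) 0"
        using g unfolding riesz_hom_def by (simp add: linear_add linear_0)
      have "g x = - f x" "g y = - f y" using x y l by auto
      then show "sup (sup x y) 0 + inf (inf x y) 0 \<in> {x. l x = 0}"
        using hf hg l by (auto simp: max_def min_def)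
    qed
  qed
  ultimately show "positive_functional l \<and> G_space {x. l x = 0}" by blast
next
  assume "positive_functional l \<and> G_space {x. l x = 0}"
  then have pos: "positive_functional l" and G: "G_space {x. l x = 0}" by auto
  show "\<exists>f g. riesz_hom f \<and> riesz_hom g \<and> l = (\<lambda>x. f x + g x)"
  proof (cases "\<forall>a b. 0 \<le> a \<longrightarrow> 0 \<le> b \<longrightarrow> inf a b = 0 \<longrightarrow> l a = 0 \<or> l b = 0")
    case True
    have "riesz_hom l"
      by (rule riesz_crit[OF assms]) (use True l_nonneg[OF assms pos G] in auto)
    moreover have "riesz_hom (\<lambda>x::'a. 0::real)" unfolding riesz_hom_def by (simp add: linear_zero)
    ultimately show ?thesis by (intro exI[of _ l] exI[of _ "\<lambda>x. 0"]) auto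
  next
    case False
    then obtain u v where u: "0 \<le> u" and v: "0 \<le> v" and uv: "inf u v = 0"
      and lu: "l u \<noteq> 0" and lv: "l v \<noteq> 0" by blast
    have lu': "0 < l u" "0 < l v" using lu lv u v l_nonneg[OF assms pos G] by (auto simp: order_le_less)
    show ?thesis
      using f_riesz[OF assms pos G u v uv lu'] g_riesz[OF assms pos G u v uv lu']
      by (intro exI[of _ "\<lambda>z. l z - gg l v z"] exI[of _ "gg l v"]) auto
  qed
qed

end
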